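(* A coarse space $(X,\mathcal E)$ has $\operatorname{asdim}(X)\le n$ for some $n\in\omega$ if and only if for every $\varepsilon\in\mathcal E$ there exist $\delta\in\mathcal E$ and a coloring $\chi:X\to\{0,\dots,n\}$ such that every $\chi$-monochrome $\varepsilon$-chain $C\subset X$ satisfies $C\times C\subset\delta$.
   Context: A coarse space is a pair $(X,\mathcal E)$ of a set and a family of entourages $\varepsilon\subset X\times X$ that contain the diagonal, are symmetric, are (up to containment) closed under composition, and such that any symmetric $\delta$ with $\Delta_X\subset\delta\subset\varepsilon\in\mathcal E$ is in $\mathcal E$. $B(x,\varepsilon)=\{y:(x,y)\in\varepsilon\}$; $\operatorname{mesh}(\mathcal U)=\bigcup_{U\in\mathcal U}U\times U$. $\operatorname{asdim}(X)$ is the least $n\in\omega$ such that for every $\varepsilon\in\mathcal E$ there is a cover $\mathcal U$ of $X$ with $\operatorname{mesh}(\mathcal U)\subset\delta$ for some $\delta\in\mathcal E$ and each $B(x,\varepsilon)$ meeting at most $n+1$ members of $\mathcal U$ ($\infty$ if none). An $\varepsilon$-chain is a finite set $\{x_0,\dots,x_m\}$ with $(x_i,x_{i+1})\in\varepsilon$ for all $i<m$; it is $\chi$-monochrome if $\chi$ is constant on it. *)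

theory Defs
  imports Main "HOL-Library.Extended_Nat"
begin

definition coarse_space :: "'a set \<Rightarrow> ('a \<times> 'a) set set \<Rightarrow> bool" where
  "coarse_space X E \<longleftrightarrow>
     (\<forall>\<epsilon>\<in>E. \<epsilon> \<subseteq> X \<times> X \<and> Id_on X \<subseteq> \<epsilon> \<and> sym \<epsilon>) \<and>
     (\<forall>\<epsilon>\<in>E. \<forall>\<delta>\<in>E. \<exists>\<eta>\<in>E. \<epsilon> O \<delta> \<subseteq> \<eta>) \<and>
     (\<forall>\<epsilon>\<in>E. \<forall>\<delta>. sym \<delta> \<and> Id_on X \<subseteq> \<delta> \<and> \<delta> \<subseteq> \<epsilon> \<longrightarrow> \<delta> \<in> E)"

definition ball_ent :: "'a \<Rightarrow> ('a \<times> 'a) set \<Rightarrow> 'a set" where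
  "ball_ent x \<epsilon> = {y. (x, y) \<in> \<epsilon>}"

definition mesh :: "'a set set \<Rightarrow> ('a \<times> 'a) set" where
  "mesh \<U> = (\<Union>U\<in>\<U>. U \<times> U)"

definition asdim_prop :: "'a set \<Rightarrow> ('a \<times> 'a) set set \<Rightarrow> nat \<Rightarrow> bool" where
  "asdim_prop X E n \<longleftrightarrow>
     (\<forall>\<epsilon>\<in>E. \<exists>\<U>. (\<forall>U\<in>\<U>. U \<subseteq> X) \<and> \<Union>\<U> = X \<and>
        (\<exists>\<delta>\<in>E. mesh \<U> \<subseteq> \<delta>) \<and>
        (\<forall>x\<in>X. finite {U\<in>\<U>. U \<inter> ball_ent x \<epsilon> \<noteq> {}} \<and>
                card {U\<in>\<U>. U \<inter> ball_ent x \<epsilon> \<noteq> {}} \<le> n + 1))"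

definition asdim :: "'a set \<Rightarrow> ('a \<times> 'a) set set \<Rightarrow> enat" where
  "asdim X E = (if \<exists>n. asdim_prop X E n then enat (LEAST n. asdim_prop X E n) else \<infinity>)"

definition eps_chain :: "('a \<times> 'a) set \<Rightarrow> 'a set \<Rightarrow> bool" where
  "eps_chain \<epsilon> C \<longleftrightarrow>
     (\<exists>m::nat. \<exists>xs::nat \<Rightarrow> 'a. C = xs ` {0..m} \<and> (\<forall>i<m. (xs i, xs (Suc i)) \<in> \<epsilon>))"

definition monochrome :: "('a \<Rightarrow> nat) \<Rightarrow> 'a set \<Rightarrow> bool" where
  "monochrome \<chi> C \<longleftrightarrow> (\<forall>x\<in>C. \<forall>y\<in>C. \<chi> x = \<chi> y)"

end

theory Submission
  imports Defs
begin

lemma prop_mono: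
  assumes a: "asdim_prop X E m" and mn: "m \<le> n" shows "asdim_prop X E n"
  unfolding asdim_prop_def
proof (rule ballI)
  fix e assume eE: "e \<in> E"
  from bspec[OF a[unfolded asdim_prop_def] eE]
  obtain W where W1: "\<forall>V\<in>W. V \<subseteq> X" and W2: "\<Union>W = X" and W3: "\<exists>\<delta>\<in>E. mesh W \<subseteq> \<delta>"
    and W4: "\<forall>x\<in>X. finite {V\<in>W. V \<inter> ball_ent x e \<noteq> {}} \<and>
                card {V\<in>W. V \<inter> ball_ent x e \<noteq> {}} \<le> m + 1"
    by (elim exE conjE)
  have W5: "\<forall>x\<in>X. finite {V\<in>W. V \<inter> ball_ent x e \<noteq> {}} \<and>
                card {V\<in>W. V \<inter> ball_ent x e \<noteq> {}} \<le> n + 1"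
  proof (rule ballI)
    fix x assume "x \<in> X"
    with W4 have "finite {V\<in>W. V \<inter> ball_ent x e \<noteq> {}} \<and>
                card {V\<in>W. V \<inter> ball_ent x e \<noteq> {}} \<le> m + 1" by (rule bspec)
    then show "finite {V\<in>W. V \<inter> ball_ent x e \<noteq> {}} \<and>
                card {V\<in>W. V \<inter> ball_ent x e \<noteq> {}} \<le> n + 1" using mn by linarith
  qed
  show "\<exists>\<U>. (\<forall>U\<in>\<U>. U \<subseteq> X) \<and> \<Union> \<U> = X \<and> (\<exists>\<delta>\<in>E. mesh \<U> \<subseteq> \<delta>) \<and>
        (\<forall>x\<in>X. finite {U \<in> \<U>. U \<inter> ball_ent x e \<noteq> {}} \<and> card {U \<in> \<U>. U \<inter> ball_ent x e \<noteq> {}} \<le> n + 1)"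
    by (rule exI[of _ W], intro conjI W1 W2 W3 W5)
qed

lemma asdim_le_iff: "asdim X E \<le> enat n \<longleftrightarrow> asdim_prop X E n"
proof (cases "\<exists>m. asdim_prop X E m")
  case True
  then have ad: "asdim X E = enat (LEAST m. asdim_prop X E m)" unfolding asdim_def by simp
  have L: "asdim_prop X E (LEAST m. asdim_prop X E m)" using True by (rule LeastI_ex)
  show ?thesis
  proof
    assume "asdim X E \<le> enat n"
    then have "(LEAST m. asdim_prop X E m) \<le> n" unfolding ad by simp
    with L show "asdim_prop X E n" by (rule prop_mono)
  next
    assume "asdim_prop X E n"
    then have "(LEAST m. asdim_prop X E m) \<le> n" by (rule Least_le)
    then show "asdim X E \<le> enat n" unfolding ad by simp
  qed
next
  case False
  then have ad: "asdim X E = \<infinity>" unfolding asdim_def by simp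
  show ?thesis using False ad by simp
qed

lemma relpow_sym:
  assumes "sym e" shows "(x, y) \<in> e ^^ k \<Longrightarrow> (y, x) \<in> e ^^ k"
proof (induction k arbitrary: x y)
  case 0 then show ?case by simp
next
  case (Suc k)
  from Suc.prems obtain z where "(x, z) \<in> e ^^ k" "(z, y) \<in> e" by (rule relpow_Suc_E)
  then show ?case using Suc.IH assms by (meson relpow_Suc_I2 symD)
qed

lemma relpow_in_X:
  assumes "e \<subseteq> X \<times> X" "x \<in> X"
  shows "(x, u) \<in> e ^^ k \<Longrightarrow> u \<in> X"
proof (induction k arbitrary: u)
  case 0 then show ?case using assms by simp
next
  case (Suc k)
  then obtain z where "(z, u) \<in> e" by (meson relpow_Suc_E)
  then show ?case using assms by auto
qed

lemma relpow_mono_X: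
  assumes "e \<subseteq> X \<times> X" "Id_on X \<subseteq> e" "x \<in> X"
  shows "(x, u) \<in> e ^^ r \<Longrightarrow> r \<le> r' \<Longrightarrow> (x, u) \<in> e ^^ r'"
proof (induction r' arbitrary: r)
  case 0 then show ?case by simp
next
  case (Suc r')
  show ?case
  proof (cases "r = Suc r'")
    case True then show ?thesis using Suc by simp
  next
    case False
    then have "r \<le> r'" using Suc.prems(2) by simp
    then have "(x, u) \<in> e ^^ r'" by (rule Suc.IH[OF Suc.prems(1)])
    moreover have "u \<in> X" using relpow_in_X[OF assms(1,3)] Suc.prems(1) by blast
    then have "(u, u) \<in> e" using assms(2) by auto
    ultimately show ?thesis by (rule relpow_Suc_I)
  qed
qed

lemma cs_comp:
  assumes "coarse_space X E" "a \<in> E" "b \<in> E"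
  shows "\<exists>\<eta>\<in>E. a O b \<subseteq> \<eta>"
proof -
  have "\<forall>\<epsilon>\<in>E. \<forall>\<delta>\<in>E. \<exists>\<eta>\<in>E. \<epsilon> O \<delta> \<subseteq> \<eta>"
    using assms(1) unfolding coarse_space_def by (elim conjE)
  then show ?thesis using assms(2,3) by simp
qed

lemma cs_ent:
  assumes "coarse_space X E" "e \<in> E"
  shows "e \<subseteq> X \<times> X" "Id_on X \<subseteq> e" "sym e"
proof -
  have "\<forall>\<epsilon>\<in>E. \<epsilon> \<subseteq> X \<times> X \<and> Id_on X \<subseteq> \<epsilon> \<and> sym \<epsilon>"
    using assms(1) unfolding coarse_space_def by (elim conjE)
  then show "e \<subseteq> X \<times> X" "Id_on X \<subseteq> e" "sym e" using assms(2) by simp_all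
qed

lemma relpow_in_E:
  assumes "coarse_space X E" "e \<in> E"
  shows "\<exists>\<eta>\<in>E. e ^^ (Suc k) \<subseteq> \<eta>"
proof (induction k)
  case 0
  have "e ^^ Suc 0 = e" by simp
  then show ?case using assms(2) by (intro bexI[of _ e]) simp_all
next
  case (Suc k)
  then obtain \<eta> where h: "\<eta> \<in> E" "e ^^ Suc k \<subseteq> \<eta>" by (elim bexE)
  obtain \<eta>' where h': "\<eta>' \<in> E" "\<eta> O e \<subseteq> \<eta>'"
    using cs_comp[OF assms(1) h(1) assms(2)] by (elim bexE)
  have "e ^^ Suc (Suc k) = e ^^ Suc k O e" by simp
  also have "\<dots> \<subseteq> \<eta> O e" using h(2) by (rule relcomp_mono) simp
  finally have "e ^^ Suc (Suc k) \<subseteq> \<eta>'" using h'(2) by simp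
  then show ?case using h'(1) by (intro bexI[of _ \<eta>'])
qed

lemma pigeon:
  fixes f :: "nat \<Rightarrow> nat"
  shows "(\<forall>i<j. f i < f (Suc i)) \<Longrightarrow> f j \<ge> f 0 + j"
proof (induction j)
  case 0 then show ?case by simp
next
  case (Suc j)
  then have "f 0 + j \<le> f j" "f j < f (Suc j)" by auto
  then show ?case by simp
qed

lemma col_imp_prop:
  assumes cs: "coarse_space X E"
    and hyp: "\<forall>\<epsilon>\<in>E. \<exists>\<delta>\<in>E. \<exists>\<chi>::'a \<Rightarrow> nat. \<chi> ` X \<subseteq> {0..n} \<and>
       (\<forall>C. C \<subseteq> X \<and> eps_chain \<epsilon> C \<and> monochrome \<chi> C \<longrightarrow> C \<times> C \<subseteq> \<delta>)"
  shows "asdim_prop X E n"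
  unfolding asdim_prop_def
proof
  fix \<epsilon> assume eE: "\<epsilon> \<in> E"
  obtain \<eta> where hE: "\<eta> \<in> E" and eeh: "\<epsilon> O \<epsilon> \<subseteq> \<eta>" using cs_comp[OF cs eE eE] by (elim bexE)
  have esym: "sym \<epsilon>" using cs_ent[OF cs eE] by simp
  have hsym: "sym \<eta>" using cs_ent[OF cs hE] by simp
  from bspec[OF hyp hE] obtain \<delta> where dE: "\<delta> \<in> E" and ex: "\<exists>\<chi>::'a \<Rightarrow> nat. \<chi> ` X \<subseteq> {0..n} \<and>
       (\<forall>C. C \<subseteq> X \<and> eps_chain \<eta> C \<and> monochrome \<chi> C \<longrightarrow> C \<times> C \<subseteq> \<delta>)" by (elim bexE)
  from ex obtain \<chi> :: "'a \<Rightarrow> nat" where col: "\<chi> ` X \<subseteq> {0..n}"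
    and chA: "\<forall>C. C \<subseteq> X \<and> eps_chain \<eta> C \<and> monochrome \<chi> C \<longrightarrow> C \<times> C \<subseteq> \<delta>" by (elim exE conjE)
  have ch: "C \<times> C \<subseteq> \<delta>" if "C \<subseteq> X" "eps_chain \<eta> C" "monochrome \<chi> C" for C
    using chA that by simp
  define R where "R = {(a, b). a \<in> X \<and> b \<in> X \<and> (a, b) \<in> \<eta> \<and> \<chi> a = \<chi> b}"
  have seq: "\<exists>m xs. xs 0 = a \<and> xs m = b \<and> (\<forall>i\<le>m. xs i \<in> X \<and> \<chi> (xs i) = \<chi> a)
      \<and> (\<forall>i<m. (xs i, xs (Suc i)) \<in> \<eta>)" if r: "(a, b) \<in> R\<^sup>*" "a \<in> X" for a b
    using r(1)
  proof (induction rule: rtrancl_induct)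
    case base
    show ?case by (rule exI[of _ 0], rule exI[of _ "\<lambda>_. a"]) (simp add: r(2))
  next
    case (step b c)
    from step.IH obtain m xs where xs: "xs 0 = a" "xs m = b" "\<forall>i\<le>m. xs i \<in> X \<and> \<chi> (xs i) = \<chi> a"
      "\<forall>i<m. (xs i, xs (Suc i)) \<in> \<eta>" by (elim exE conjE)
    define ys where "ys = xs(Suc m := c)"
    have y01: "ys 0 = a" "ys (Suc m) = c" using xs(1) by (simp_all add: ys_def)
    have Rbc: "c \<in> X" "(b, c) \<in> \<eta>" "\<chi> b = \<chi> c" using step(2) unfolding R_def by simp_all
    have xm: "\<chi> b = \<chi> a" using spec[OF xs(3), of m] xs(2) by simp
    have y2: "\<forall>i\<le>Suc m. ys i \<in> X \<and> \<chi> (ys i) = \<chi> a"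
    proof (intro allI impI)
      fix i assume i: "i \<le> Suc m"
      show "ys i \<in> X \<and> \<chi> (ys i) = \<chi> a"
      proof (cases "i = Suc m")
        case True then show ?thesis using Rbc xm by (simp add: ys_def)
      next
        case False
        then have "i \<le> m" using i by simp
        then show ?thesis using False xs(3) by (simp add: ys_def)
      qed
    qed
    have y3: "\<forall>i<Suc m. (ys i, ys (Suc i)) \<in> \<eta>"
    proof (intro allI impI)
      fix i assume i: "i < Suc m"
      show "(ys i, ys (Suc i)) \<in> \<eta>"
      proof (cases "i = m")
        case True then show ?thesis using Rbc xs(2) by (simp add: ys_def)
      next
        case False
        then have "i < m" using i by simp
        then show ?thesis using xs(4) by (simp add: ys_def)
      qed
    qed
    show ?case by (intro exI[of _ "Suc m"] exI[of _ ys] conjI y01 y2 y3)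
  qed
  have R1: "b \<in> X \<and> \<chi> b = \<chi> a \<and> (a, b) \<in> \<delta>" if r: "(a, b) \<in> R\<^sup>*" "a \<in> X" for a b
  proof -
    obtain m xs where xs: "xs 0 = a" "xs m = b" "\<forall>i\<le>m. xs i \<in> X \<and> \<chi> (xs i) = \<chi> a"
      "\<forall>i<m. (xs i, xs (Suc i)) \<in> \<eta>" using seq[OF r] by (elim exE conjE)
    let ?C = "xs ` {0..m}"
    have "?C \<subseteq> X" using xs by auto
    moreover have "eps_chain \<eta> ?C" unfolding eps_chain_def by (intro exI[of _ m] exI[of _ xs] conjI refl xs(4))
    moreover have "monochrome \<chi> ?C" unfolding monochrome_def using xs by auto
    ultimately have "?C \<times> ?C \<subseteq> \<delta>" by (rule ch)
    moreover have "a \<in> ?C" using xs(1) by (intro image_eqI[of _ _ 0]) simp_all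
    moreover have "b \<in> ?C" using xs(2) by (intro image_eqI[of _ _ m]) simp_all
    moreover have "b \<in> X \<and> \<chi> b = \<chi> a" using xs(2,3) by auto
    ultimately show ?thesis by blast
  qed
  have Rsym: "sym R" using hsym unfolding R_def sym_def by auto
  have Rssym: "(b, a) \<in> R\<^sup>*" if "(a, b) \<in> R\<^sup>*" for a b
    using sym_rtrancl[OF Rsym] that by (meson symD)
  define K where "K w = R\<^sup>* `` {w}" for w
  define \<U> where "\<U> = K ` X"
  have Ksub: "K w \<subseteq> X" if "w \<in> X" for w unfolding K_def using R1[OF _ that] by blast
  have Kin: "w \<in> K w" for w unfolding K_def by auto
  have Keq: "K w1 = K w2" if "y \<in> K w1" "z \<in> K w2" "(y, z) \<in> R\<^sup>*" for w1 w2 y z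
  proof -
    have a: "(w1, y) \<in> R\<^sup>*" "(w2, z) \<in> R\<^sup>*" using that unfolding K_def by auto
    have "(z, w2) \<in> R\<^sup>*" using Rssym[OF a(2)] .
    then have w12: "(w1, w2) \<in> R\<^sup>*" using a(1) that(3) by (meson rtrancl_trans)
    then have w21: "(w2, w1) \<in> R\<^sup>*" by (rule Rssym)
    show ?thesis
    proof (rule set_eqI)
      fix v
      show "v \<in> K w1 \<longleftrightarrow> v \<in> K w2"
        unfolding K_def using w12 w21 by (auto intro: rtrancl_trans)
    qed
  qed
  show "\<exists>\<U>. (\<forall>U\<in>\<U>. U \<subseteq> X) \<and> \<Union> \<U> = X \<and> (\<exists>\<delta>\<in>E. mesh \<U> \<subseteq> \<delta>) \<and>
        (\<forall>x\<in>X. finite {U \<in> \<U>. U \<inter> ball_ent x \<epsilon> \<noteq> {}} \<and> card {U \<in> \<U>. U \<inter> ball_ent x \<epsilon> \<noteq> {}} \<le> n + 1)"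
  proof (intro exI[of _ \<U>] conjI ballI)
    show "U \<subseteq> X" if "U \<in> \<U>" for U using that Ksub unfolding \<U>_def by auto
    show "\<Union> \<U> = X" using Ksub Kin unfolding \<U>_def by blast
    have "mesh \<U> \<subseteq> \<delta>"
    proof
      fix p assume "p \<in> mesh \<U>"
      then obtain w y z where w: "w \<in> X" "y \<in> K w" "z \<in> K w" "p = (y, z)" unfolding mesh_def \<U>_def by auto
      then have "(w, y) \<in> R\<^sup>*" "(w, z) \<in> R\<^sup>*" unfolding K_def by auto
      then have "(y, z) \<in> R\<^sup>*" using Rssym by (meson rtrancl_trans)
      moreover have "y \<in> X" using w Ksub by auto
      ultimately show "p \<in> \<delta>" using R1[of y z] w(4) by simp
    qed
    then show "\<exists>\<delta>\<in>E. mesh \<U> \<subseteq> \<delta>" using dE by blast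
    fix x assume xX: "x \<in> X"
    let ?F = "{U \<in> \<U>. U \<inter> ball_ent x \<epsilon> \<noteq> {}}"
    define g where "g U = \<chi> (SOME y. y \<in> U \<inter> ball_ent x \<epsilon>)" for U
    have gin: "(SOME y. y \<in> U \<inter> ball_ent x \<epsilon>) \<in> U \<inter> ball_ent x \<epsilon>" if "U \<in> ?F" for U
    proof -
      from that obtain y where "y \<in> U \<inter> ball_ent x \<epsilon>" by blast
      then show ?thesis by (rule someI)
    qed
    have inj: "inj_on g ?F"
    proof (rule inj_onI)
      fix U1 U2 assume U1: "U1 \<in> ?F" and U2: "U2 \<in> ?F" and gg: "g U1 = g U2"
      define y1 where "y1 = (SOME y. y \<in> U1 \<inter> ball_ent x \<epsilon>)"
      define y2 where "y2 = (SOME y. y \<in> U2 \<inter> ball_ent x \<epsilon>)"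
      have y1: "y1 \<in> U1" "(x, y1) \<in> \<epsilon>" using gin[OF U1] unfolding y1_def ball_ent_def by auto
      have y2: "y2 \<in> U2" "(x, y2) \<in> \<epsilon>" using gin[OF U2] unfolding y2_def ball_ent_def by auto
      obtain w1 w2 where w: "w1 \<in> X" "U1 = K w1" "w2 \<in> X" "U2 = K w2" using U1 U2 unfolding \<U>_def by auto
      have "(y1, x) \<in> \<epsilon>" using y1 esym by (meson symD)
      then have "(y1, y2) \<in> \<eta>" by (rule subsetD[OF eeh relcompI[OF _ y2(2)]])
      moreover have "y1 \<in> X" using Ksub[OF w(1)] y1(1) unfolding w(2) by (rule subsetD)
      moreover have "y2 \<in> X" using Ksub[OF w(3)] y2(1) unfolding w(4) by (rule subsetD)
      moreover have "\<chi> y1 = \<chi> y2" using gg unfolding g_def y1_def y2_def by simp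
      ultimately have "(y1, y2) \<in> R" unfolding R_def by auto
      then have "(y1, y2) \<in> R\<^sup>*" by (rule r_into_rtrancl)
      then have "K w1 = K w2" using Keq[of y1 w1 y2 w2] y1(1) y2(1) w by simp
      then show "U1 = U2" using w by simp
    qed
    have gim: "g ` ?F \<subseteq> {0..n}"
    proof
      fix c assume "c \<in> g ` ?F"
      then obtain U where U: "U \<in> ?F" "c = g U" by auto
      then have "(SOME y. y \<in> U \<inter> ball_ent x \<epsilon>) \<in> X"
      proof -
        obtain w where "w \<in> X" "U = K w" using U(1) unfolding \<U>_def by blast
        then show ?thesis using gin[OF U(1)] Ksub[of w] by auto
      qed
      then show "c \<in> {0..n}" using col U unfolding g_def by auto
    qed
    show "finite ?F" using inj_on_finite[OF inj gim] by simp
    show "card ?F \<le> n + 1" using card_inj_on_le[OF inj gim] by simp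
  qed
qed


lemma prop_imp_col:
  assumes cs: "coarse_space X E" and a: "asdim_prop X E n" and eE: "\<epsilon> \<in> E"
  shows "\<exists>\<delta>\<in>E. \<exists>\<chi>::'a \<Rightarrow> nat. \<chi> ` X \<subseteq> {0..n} \<and>
       (\<forall>C. C \<subseteq> X \<and> eps_chain \<epsilon> C \<and> monochrome \<chi> C \<longrightarrow> C \<times> C \<subseteq> \<delta>)"
proof -
  note eX = cs_ent[OF cs eE]
  define M where "M = Suc (2 * n + 1)"
  obtain \<eta> where hE: "\<eta> \<in> E" and hM: "\<epsilon> ^^ M \<subseteq> \<eta>"
    using relpow_in_E[OF cs eE, of "2 * n + 1"] unfolding M_def by (elim bexE)
  from bspec[OF a[unfolded asdim_prop_def] hE]
  obtain W where W1: "\<forall>V\<in>W. V \<subseteq> X" and W2: "\<Union>W = X" and W3: "\<exists>\<delta>\<in>E. mesh W \<subseteq> \<delta>"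
    and W4: "\<forall>x\<in>X. finite {V\<in>W. V \<inter> ball_ent x \<eta> \<noteq> {}} \<and>
                card {V\<in>W. V \<inter> ball_ent x \<eta> \<noteq> {}} \<le> n + 1"
    by (elim exE conjE)
  from W3 obtain \<delta>0 where d0E: "\<delta>0 \<in> E" and d0: "mesh W \<subseteq> \<delta>0" by (elim bexE)
  define S where "S r x = {U \<in> W. U \<inter> ball_ent x (\<epsilon> ^^ r) \<noteq> {}}" for r x
  have Smem: "U \<in> S r x \<longleftrightarrow> U \<in> W \<and> (\<exists>u\<in>U. (x, u) \<in> \<epsilon> ^^ r)" for U r x
    unfolding S_def ball_ent_def by blast
  have Smono: "S r x \<subseteq> S r' x" if x: "x \<in> X" and rr: "r \<le> r'" for x r r'
  proof
    fix U assume "U \<in> S r x"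
    then obtain u where u: "U \<in> W" "u \<in> U" "(x, u) \<in> \<epsilon> ^^ r" unfolding Smem by blast
    have "(x, u) \<in> \<epsilon> ^^ r'" by (rule relpow_mono_X[OF eX(1) eX(2) x u(3) rr])
    then show "U \<in> S r' x" unfolding Smem using u(1,2) by blast
  qed
  have Sbound: "S r x \<subseteq> {V\<in>W. V \<inter> ball_ent x \<eta> \<noteq> {}}" if x: "x \<in> X" and rM: "r \<le> M" for x r
  proof
    fix U assume "U \<in> S r x"
    then have "U \<in> S M x" using Smono[OF x rM] by blast
    then obtain u where u: "U \<in> W" "u \<in> U" "(x, u) \<in> \<epsilon> ^^ M" unfolding Smem by blast
    have "(x, u) \<in> \<eta>" using hM u(3) by blast
    then show "U \<in> {V\<in>W. V \<inter> ball_ent x \<eta> \<noteq> {}}" using u(1,2) unfolding ball_ent_def by blast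
  qed
  have Sfin: "finite (S r x)" "card (S r x) \<le> n + 1" if x: "x \<in> X" and rM: "r \<le> M" for x r
  proof -
    have f: "finite {V\<in>W. V \<inter> ball_ent x \<eta> \<noteq> {}}" "card {V\<in>W. V \<inter> ball_ent x \<eta> \<noteq> {}} \<le> n + 1"
      using bspec[OF W4 x] by simp_all
    show "finite (S r x)" by (rule rev_finite_subset[OF f(1) Sbound[OF x rM]])
    have "card (S r x) \<le> card {V\<in>W. V \<inter> ball_ent x \<eta> \<noteq> {}}" by (rule card_mono[OF f(1) Sbound[OF x rM]])
    then show "card (S r x) \<le> n + 1" using f(2) by linarith
  qed
  have S0: "S 0 x \<noteq> {}" if x: "x \<in> X" for x
  proof -
    from x W2 obtain U where U: "U \<in> W" "x \<in> U" by blast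
    have "(x, x) \<in> \<epsilon> ^^ 0" by simp
    then have "U \<in> S 0 x" unfolding Smem using U by blast
    then show ?thesis by blast
  qed
  have Sstep: "S r x \<subseteq> S (Suc r) y" if yx: "(y, x) \<in> \<epsilon>" for x y r
  proof
    fix U assume "U \<in> S r x"
    then obtain u where u: "U \<in> W" "u \<in> U" "(x, u) \<in> \<epsilon> ^^ r" unfolding Smem by blast
    have "(y, u) \<in> \<epsilon> ^^ Suc r" by (rule relpow_Suc_I2[OF yx u(3)])
    then show "U \<in> S (Suc r) y" unfolding Smem using u(1,2) by blast
  qed
  have stable: "\<exists>j\<le>n. S (2 * j) x = S (2 * Suc j) x" if x: "x \<in> X" for x
  proof (rule ccontr)
    assume "\<not> ?thesis"
    then have ne: "S (2 * j) x \<noteq> S (2 * Suc j) x" if "j \<le> n" for j using that by blast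
    define f where "f j = card (S (2 * j) x)" for j
    have inc: "\<forall>i<Suc n. f i < f (Suc i)"
    proof (intro allI impI)
      fix i assume i: "i < Suc n"
      have sub: "S (2 * i) x \<subseteq> S (2 * Suc i) x" by (rule Smono[OF x]) simp
      have fin: "finite (S (2 * Suc i) x)" by (rule Sfin(1)[OF x]) (use i in \<open>simp add: M_def\<close>)
      have "S (2 * i) x \<subset> S (2 * Suc i) x" using sub ne[of i] i by auto
      then show "f i < f (Suc i)" unfolding f_def by (rule psubset_card_mono[OF fin])
    qed
    have "f 0 + Suc n \<le> f (Suc n)" by (rule pigeon[OF inc])
    moreover have "f (Suc n) \<le> n + 1" unfolding f_def by (rule Sfin(2)[OF x]) (simp add: M_def)
    moreover have "f 0 \<ge> 1"
    proof -
      have "finite (S 0 x)" by (rule Sfin(1)[OF x]) simp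
      then have "card (S 0 x) > 0" using S0[OF x] by (simp add: card_gt_0_iff)
      then show ?thesis unfolding f_def by simp
    qed
    ultimately show False by linarith
  qed
  define J where "J x = (LEAST j. S (2 * j) x = S (2 * Suc j) x)" for x
  define \<sigma> where "\<sigma> x = S (2 * J x) x" for x
  define \<chi> where "\<chi> x = card (\<sigma> x) - 1" for x
  have Jst: "\<sigma> x = S (2 * Suc (J x)) x" if x: "x \<in> X" for x
  proof -
    from stable[OF x] obtain j where "S (2 * j) x = S (2 * Suc j) x" by blast
    then have "S (2 * J x) x = S (2 * Suc (J x)) x" unfolding J_def by (rule LeastI)
    then show ?thesis unfolding \<sigma>_def .
  qed
  have Jle: "J x \<le> n" if x: "x \<in> X" for x
  proof -
    from stable[OF x] obtain j where j: "j \<le> n" "S (2 * j) x = S (2 * Suc j) x" by blast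
    have "J x \<le> j" unfolding J_def by (rule Least_le[where P="\<lambda>j. S (2 * j) x = S (2 * Suc j) x", OF j(2)])
    then show ?thesis using j(1) by linarith
  qed
  have JM: "2 * J x \<le> M" if x: "x \<in> X" for x using Jle[OF x] unfolding M_def by linarith
  have \<sigma>fin: "finite (\<sigma> x)" "card (\<sigma> x) \<le> n + 1" if x: "x \<in> X" for x
    unfolding \<sigma>_def using Sfin[OF x JM[OF x]] by simp_all
  have \<sigma>pos: "card (\<sigma> x) \<ge> 1" if x: "x \<in> X" for x
  proof -
    have "S 0 x \<subseteq> \<sigma> x" unfolding \<sigma>_def by (rule Smono[OF x]) simp
    then have "\<sigma> x \<noteq> {}" using S0[OF x] by blast
    then have "card (\<sigma> x) > 0" using \<sigma>fin(1)[OF x] by (simp add: card_gt_0_iff)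
    then show ?thesis by simp
  qed
  have key: "\<sigma> x = \<sigma> y" if x: "x \<in> X" and y: "y \<in> X" and xy: "(x, y) \<in> \<epsilon>" and cxy: "\<chi> x = \<chi> y" for x y
  proof -
    have yx: "(y, x) \<in> \<epsilon>" using xy eX(3) by (rule symD[rotated])
    have A: "\<sigma> x \<subseteq> S (Suc (2 * J x)) y" unfolding \<sigma>_def by (rule Sstep[OF yx])
    have "S (Suc (2 * J x)) y \<subseteq> S (Suc (Suc (2 * J x))) x" by (rule Sstep[OF xy])
    also have "Suc (Suc (2 * J x)) = 2 * Suc (J x)" by simp
    finally have B: "S (Suc (2 * J x)) y \<subseteq> \<sigma> x" using Jst[OF x] by simp
    have eqx: "\<sigma> x = S (Suc (2 * J x)) y" using A B by (rule subset_antisym)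
    have cc: "card (\<sigma> x) = card (\<sigma> y)" using cxy \<sigma>pos[OF x] \<sigma>pos[OF y] unfolding \<chi>_def by linarith
    have JMx: "Suc (2 * J x) \<le> M" using Jle[OF x] unfolding M_def by linarith
    have finx: "finite (\<sigma> x)" by (rule \<sigma>fin(1)[OF x])
    have finy: "finite (\<sigma> y)" by (rule \<sigma>fin(1)[OF y])
    show ?thesis
    proof (cases "Suc (2 * J x) \<le> 2 * J y")
      case True
      have "\<sigma> x \<subseteq> \<sigma> y" unfolding eqx \<sigma>_def[of y] by (rule Smono[OF y True])
      then show ?thesis using card_subset_eq[OF finy _ cc] by blast
    next
      case False
      then have le: "2 * J y \<le> Suc (2 * J x)" by simp
      have "\<sigma> y \<subseteq> \<sigma> x" unfolding eqx \<sigma>_def[of y] by (rule Smono[OF y le])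
      then show ?thesis using card_subset_eq[OF finx _ cc[symmetric]] by blast
    qed
  qed
  obtain \<delta>1 where d1E: "\<delta>1 \<in> E" and d1: "\<eta> O \<delta>0 \<subseteq> \<delta>1" using cs_comp[OF cs hE d0E] by (elim bexE)
  obtain \<delta>2 where d2E: "\<delta>2 \<in> E" and d2: "\<delta>1 O \<eta> \<subseteq> \<delta>2" using cs_comp[OF cs d1E hE] by (elim bexE)
  have near: "\<exists>u\<in>U0. (z, u) \<in> \<epsilon> ^^ M" if z: "z \<in> X" and U0: "U0 \<in> \<sigma> z" for z U0
  proof -
    from U0 obtain u where u: "u \<in> U0" "(z, u) \<in> \<epsilon> ^^ (2 * J z)" unfolding \<sigma>_def Smem by blast
    have "(z, u) \<in> \<epsilon> ^^ M" by (rule relpow_mono_X[OF eX(1) eX(2) z u(2) JM[OF z]])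
    then show ?thesis using u(1) by blast
  qed
  have colX: "\<chi> ` X \<subseteq> {0..n}"
  proof
    fix c assume "c \<in> \<chi> ` X"
    then obtain x where x: "x \<in> X" "c = \<chi> x" by blast
    then show "c \<in> {0..n}" using \<sigma>fin(2)[OF x(1)] unfolding \<chi>_def by simp
  qed
  have chains: "C \<times> C \<subseteq> \<delta>2" if C: "C \<subseteq> X" "eps_chain \<epsilon> C" "monochrome \<chi> C" for C
  proof -
    from C(2) obtain m xs where xs: "C = xs ` {0..m}" "\<forall>i<m. (xs i, xs (Suc i)) \<in> \<epsilon>"
      unfolding eps_chain_def by (elim exE conjE)
    have inC: "xs i \<in> C" if "i \<le> m" for i unfolding xs(1) using that by simp
    have inX: "xs i \<in> X" if "i \<le> m" for i using C(1) inC[OF that] by blast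
    have same: "\<sigma> (xs i) = \<sigma> (xs 0)" if "i \<le> m" for i
      using that
    proof (induction i)
      case 0 then show ?case by simp
    next
      case (Suc i)
      have i: "i \<le> m" "i < m" using Suc.prems by simp_all
      have "\<chi> (xs i) = \<chi> (xs (Suc i))"
        using C(3) inC[OF i(1)] inC[OF Suc.prems] unfolding monochrome_def by blast
      then have "\<sigma> (xs i) = \<sigma> (xs (Suc i))"
        using key[OF inX[OF i(1)] inX[OF Suc.prems]] xs(2) i(2) by blast
      then show ?case using Suc.IH[OF i(1)] by simp
    qed
    have x0: "xs 0 \<in> X" by (rule inX) simp
    have "\<sigma> (xs 0) \<noteq> {}" using \<sigma>pos[OF x0] by (metis card.empty not_one_le_zero)
    then obtain U0 where U0: "U0 \<in> \<sigma> (xs 0)" by blast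
    have U0W: "U0 \<in> W" using U0 unfolding \<sigma>_def Smem by blast
    show ?thesis
    proof
      fix p assume "p \<in> C \<times> C"
      then obtain i k where ik: "i \<le> m" "k \<le> m" "p = (xs i, xs k)" unfolding xs(1) by auto
      have "U0 \<in> \<sigma> (xs i)" using U0 same[OF ik(1)] by simp
      then obtain u where u: "u \<in> U0" "(xs i, u) \<in> \<epsilon> ^^ M" using near[OF inX[OF ik(1)]] by blast
      have "U0 \<in> \<sigma> (xs k)" using U0 same[OF ik(2)] by simp
      then obtain v where v: "v \<in> U0" "(xs k, v) \<in> \<epsilon> ^^ M" using near[OF inX[OF ik(2)]] by blast
      have vk: "(v, xs k) \<in> \<epsilon> ^^ M" by (rule relpow_sym[OF eX(3) v(2)])
      have "(u, v) \<in> mesh W" unfolding mesh_def using U0W u(1) v(1) by blast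
      then have uv: "(u, v) \<in> \<delta>0" by (rule subsetD[OF d0])
      have xu: "(xs i, u) \<in> \<eta>" by (rule subsetD[OF hM u(2)])
      have xv: "(xs i, v) \<in> \<delta>1" by (rule subsetD[OF d1 relcompI[OF xu uv]])
      have vx: "(v, xs k) \<in> \<eta>" by (rule subsetD[OF hM vk])
      have "(xs i, xs k) \<in> \<delta>2" by (rule subsetD[OF d2 relcompI[OF xv vx]])
      then show "p \<in> \<delta>2" using ik(3) by simp
    qed
  qed
  have ch2: "\<forall>C. C \<subseteq> X \<and> eps_chain \<epsilon> C \<and> monochrome \<chi> C \<longrightarrow> C \<times> C \<subseteq> \<delta>2"
    by (intro allI impI, elim conjE) (rule chains)
  show ?thesis by (intro bexI[of _ \<delta>2] exI[of _ \<chi>] conjI colX ch2 d2E)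
qed

theorem corollary2p4:
  fixes X :: "'a set" and E :: "('a \<times> 'a) set set" and n :: nat
  assumes "coarse_space X E"
  shows "asdim X E \<le> enat n \<longleftrightarrow>
    (\<forall>\<epsilon>\<in>E. \<exists>\<delta>\<in>E. \<exists>\<chi>::'a \<Rightarrow> nat. \<chi> ` X \<subseteq> {0..n} \<and>
       (\<forall>C. C \<subseteq> X \<and> eps_chain \<epsilon> C \<and> monochrome \<chi> C \<longrightarrow> C \<times> C \<subseteq> \<delta>))"
proof
  assume "asdim X E \<le> enat n"
  then have a: "asdim_prop X E n" using asdim_le_iff by blast
  show "\<forall>\<epsilon>\<in>E. \<exists>\<delta>\<in>E. \<exists>\<chi>::'a \<Rightarrow> nat. \<chi> ` X \<subseteq> {0..n} \<and>
       (\<forall>C. C \<subseteq> X \<and> eps_chain \<epsilon> C \<and> monochrome \<chi> C \<longrightarrow> C \<times> C \<subseteq> \<delta>)"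
  proof (rule ballI)
    fix \<epsilon> assume "\<epsilon> \<in> E"
    then show "\<exists>\<delta>\<in>E. \<exists>\<chi>::'a \<Rightarrow> nat. \<chi> ` X \<subseteq> {0..n} \<and>
       (\<forall>C. C \<subseteq> X \<and> eps_chain \<epsilon> C \<and> monochrome \<chi> C \<longrightarrow> C \<times> C \<subseteq> \<delta>)"
      by (rule prop_imp_col[OF assms a])
  qed
next
  assume h: "\<forall>\<epsilon>\<in>E. \<exists>\<delta>\<in>E. \<exists>\<chi>::'a \<Rightarrow> nat. \<chi> ` X \<subseteq> {0..n} \<and>
       (\<forall>C. C \<subseteq> X \<and> eps_chain \<epsilon> C \<and> monochrome \<chi> C \<longrightarrow> C \<times> C \<subseteq> \<delta>)"
  have "asdim_prop X E n" by (rule col_imp_prop[OF assms h])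
  then show "asdim X E \<le> enat n" using asdim_le_iff by blast
qed

end
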